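(* Let $N>0$, $m>0$, $F>0$, $\alpha>0$, $w>0$, $\tau\in(0,1)$, $g\geq 0$, $L_g\geq 0$, and define \[ L=\frac{N\left[(1-\tau)(mL_g+\alpha F)+(mg+F)mN\right]}{\alpha+(Nm-\alpha)\tau},\qquad q=\frac{(1-\tau)(L+L_g-\alpha g)}{\left(Nm+\alpha(1-\tau)\right)(L+L_g)}, \] \[ p=\frac{L+L_g}{L+L_g-\alpha g}\left(mw+\frac{\alpha(1-\tau)w}{N}\right),\qquad \Pi=\left((L+L_g)q+g\right)(p-mw)-Fw . \] Assume $Nm>\alpha$. If \[ F\leq \frac{\alpha\left((L+L_g)q+g\right)L}{(L+L_g)N}, \] then $\Pi\geq 0$.
   Context: These are the symmetric-equilibrium quantities of a monopolistic-competition general equilibrium model: $N$ is the measure of firms, $m$ and $F$ the marginal and fixed labor inputs, $\alpha$ the CARA utility parameter, $w$ the nominal wage, $\tau$ the income tax rate, $g$ the government purchase of each variety, $L_g$ government employment, $L$ private employment, $q$ per-capita consumption of each variety, $p$ the common price, and $\Pi$ the profit of each firm. *)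

theory Defs
  imports Complex_Main
begin

end

theory Submission
  imports Defs
begin

theorem proposition4:
  fixes N m F \<alpha> w \<tau> g Lg :: real
  assumes "N > 0" and "m > 0" and "F > 0" and "\<alpha> > 0" and "w > 0"
    and "0 < \<tau>" and "\<tau> < 1" and "g \<ge> 0" and "Lg \<ge> 0"
    and "N * m > \<alpha>"
  shows "let L = N * ((1 - \<tau>) * (m * Lg + \<alpha> * F) + (m * g + F) * m * N)
                 / (\<alpha> + (N * m - \<alpha>) * \<tau>);
             q = (1 - \<tau>) * (L + Lg - \<alpha> * g)
                 / ((N * m + \<alpha> * (1 - \<tau>)) * (L + Lg));
             p = (L + Lg) / (L + Lg - \<alpha> * g) * (m * w + \<alpha> * (1 - \<tau>) * w / N);
             \<Pi> = ((L + Lg) * q + g) * (p - m * w) - F * w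
         in F \<le> \<alpha> * ((L + Lg) * q + g) * L / ((L + Lg) * N) \<longrightarrow> \<Pi> \<ge> 0"
proof -
  note a = assms
  define c where "c = \<alpha> + (N * m - \<alpha>) * \<tau>"
  define K where "K = N * m + \<alpha> * (1 - \<tau>)"
  define L where "L = N * ((1 - \<tau>) * (m * Lg + \<alpha> * F) + (m * g + F) * m * N) / c"
  have c0: "c > 0" unfolding c_def using a by (simp add: add_pos_nonneg)
  have cle: "c \<le> N * m" unfolding c_def using a
    by (smt (verit) mult_left_le mult_nonneg_nonneg)
  have K0: "K > 0" unfolding K_def using a by (smt (verit) mult_pos_pos)
  have Lc: "L * c = N * ((1 - \<tau>) * (m * Lg + \<alpha> * F) + (m * g + F) * m * N)"
    unfolding L_def using c0 by simp
  have num0: "N * ((1 - \<tau>) * (m * Lg + \<alpha> * F) + (m * g + F) * m * N) > 0"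
    using a by (intro mult_pos_pos add_nonneg_pos) (auto intro!: mult_nonneg_nonneg add_nonneg_nonneg)
  have L0: "L > 0" unfolding L_def using num0 c0 by simp
  have "L * c \<ge> N * N * m * m * g"
  proof -
    have "N * ((1 - \<tau>) * (m * Lg + \<alpha> * F)) \<ge> 0" using a by (auto intro!: mult_nonneg_nonneg add_nonneg_nonneg)
    moreover have "N * (F * m * N) \<ge> 0" using a by auto
    ultimately show ?thesis unfolding Lc by (simp add: algebra_simps)
  qed
  moreover have "L * c \<le> L * (N * m)" using cle L0 by simp
  ultimately have "N * m * g * (N * m) \<le> L * (N * m)" by (simp add: algebra_simps)
  hence LNmg: "N * m * g \<le> L" using a by (simp add: mult_le_cancel_right)
  define S where "S = L + Lg"
  define D where "D = S - \<alpha> * g"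
  define X where "X = (1 - \<tau>) * S + N * m * g"
  have S0: "S > 0" unfolding S_def using L0 a by simp
  have D0: "D > 0"
  proof (cases "g = 0")
    case True then show ?thesis using S0 unfolding D_def by simp
  next
    case False
    hence "\<alpha> * g < N * m * g" using a by simp
    then show ?thesis unfolding D_def S_def using LNmg a by linarith
  qed
  have X0: "X > 0" unfolding X_def using a S0 by (simp add: add_pos_nonneg)
  have Y: "N * F * K = L * K - N * m * X"
  proof -
    have e1: "L * K - N * m * X = L * c - N * m * ((1 - \<tau>) * Lg + N * m * g)"
      unfolding X_def S_def K_def c_def by (simp add: algebra_simps)
    have e2: "L * c = N * F * K + N * m * ((1 - \<tau>) * Lg + N * m * g)"
      unfolding Lc K_def by (simp add: algebra_simps)
    show ?thesis unfolding e1 e2 by simp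
  qed
  define q where "q = (1 - \<tau>) * D / (K * S)"
  define p where "p = S / D * (m * w + \<alpha> * (1 - \<tau>) * w / N)"
  have Sq: "S * q + g = X / K"
  proof -
    have "S * q = (1 - \<tau>) * D / K" unfolding q_def using S0 by simp
    moreover have "(1 - \<tau>) * D + g * K = X" unfolding X_def D_def K_def by (simp add: algebra_simps)
    ultimately show ?thesis using K0 by (simp add: field_simps)
  qed
  have pm: "p - m * w = w * \<alpha> * X / (D * N)"
    unfolding p_def X_def using D0 a unfolding D_def K_def by (simp add: field_simps)
  have Pi: "(S * q + g) * (p - m * w) - F * w = w * (\<alpha> * X * X / (K * D * N) - F)"
    unfolding Sq pm using K0 D0 a by (simp add: field_simps)
  have main: "F \<le> \<alpha> * X * X / (K * D * N)" if h: "F \<le> \<alpha> * (S * q + g) * L / (S * N)"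
  proof -
    define Y where "Y = N * F * K"
    have h1: "F * (K * S * N) \<le> \<alpha> * X * L"
      using h unfolding Sq using K0 S0 a by (simp add: field_simps)
    have h2: "Y * S \<le> \<alpha> * X * L" using h1 unfolding Y_def by (simp add: algebra_simps)
    have Yeq: "Y = N * m * (L - X) + \<alpha> * (1 - \<tau>) * L" unfolding Y_def Y by (simp add: algebra_simps K_def)
    have "N * m * (S * (L - X)) \<le> N * m * (\<alpha> * L * g)"
    proof -
      have "N * m * (S * (L - X)) + \<alpha> * (1 - \<tau>) * L * S \<le> \<alpha> * X * L"
        using h2 unfolding Yeq by (simp add: algebra_simps)
      moreover have "\<alpha> * X * L = \<alpha> * (1 - \<tau>) * L * S + N * m * (\<alpha> * L * g)"
        unfolding X_def by (simp add: algebra_simps)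
      ultimately show ?thesis by linarith
    qed
    hence h3: "S * (L - X) \<le> \<alpha> * L * g" using a by (simp add: mult_le_cancel_left)
    have h4: "X * (L - X) \<le> Y * g"
    proof -
      have "(1 - \<tau>) * (S * (L - X)) \<le> (1 - \<tau>) * (\<alpha> * L * g)" using h3 a by (simp add: mult_left_mono)
      thus ?thesis unfolding Yeq X_def by (simp add: algebra_simps)
    qed
    have "Y * D \<le> \<alpha> * X * X"
    proof -
      have "Y * D = Y * S - \<alpha> * (Y * g)" unfolding D_def by (simp add: algebra_simps)
      also have "\<dots> \<le> \<alpha> * X * L - \<alpha> * (X * (L - X))" using h2 h4 a
        by (smt (verit) mult_left_mono)
      also have "\<dots> = \<alpha> * X * X" by (simp add: algebra_simps)
      finally show ?thesis .
    qed
    thus ?thesis unfolding Y_def using K0 D0 a by (simp add: field_simps)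
  qed
  show ?thesis
    unfolding Let_def c_def[symmetric] L_def[symmetric] S_def[symmetric] D_def[symmetric]
      K_def[symmetric] q_def[symmetric] p_def[symmetric]
  proof
    assume "F \<le> \<alpha> * (S * q + g) * L / (S * N)"
    from main[OF this] have "0 \<le> \<alpha> * X * X / (K * D * N) - F" by simp
    then show "0 \<le> (S * q + g) * (p - m * w) - F * w" unfolding Pi using a by simp
  qed
qed

end
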